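(* Let $B$ be a commutative ring with identity and $A$ a dense subring of $B$. If $A$ is completely normal, then $B$ is completely normal and hence $B$ is a pm-ring.
   Context: All rings are commutative with identity; subrings contain the identity. A ring $R$ is completely normal if $\operatorname{spec} R$ (prime ideals with the Zariski topology) is a completely normal topological space. A pm-ring is a ring in which every prime ideal is contained in a unique maximal ideal. A subring $A$ of $B$ is dense in $B$ if for every ideal $I$ of $B$ and every $b\in B\setminus \operatorname{rad}(I)$ there exists $a\in B\setminus\operatorname{rad}(I)$ with $ab\in A$. *)

theory Defs
  imports "HOL-Analysis.Analysis"
begin

text \<open>Rings are carrier sets R inside an ambient commutative ring 'a (for B we use UNIV).\<close>

definition is_subring :: "'a::comm_ring_1 set \<Rightarrow> 'a set \<Rightarrow> bool" where
  "is_subring A R \<longleftrightarrow> A \<subseteq> R \<and> 0 \<in> A \<and> 1 \<in> A \<and>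
     (\<forall>x\<in>A. \<forall>y\<in>A. x + y \<in> A \<and> x - y \<in> A \<and> x * y \<in> A)"

definition ring_ideal :: "'a::comm_ring_1 set \<Rightarrow> 'a set \<Rightarrow> bool" where
  "ring_ideal R I \<longleftrightarrow> I \<subseteq> R \<and> 0 \<in> I \<and>
     (\<forall>x\<in>I. \<forall>y\<in>I. x + y \<in> I) \<and> (\<forall>r\<in>R. \<forall>x\<in>I. r * x \<in> I)"

definition prime_ideal :: "'a::comm_ring_1 set \<Rightarrow> 'a set \<Rightarrow> bool" where
  "prime_ideal R P \<longleftrightarrow> ring_ideal R P \<and> 1 \<notin> P \<and>
     (\<forall>a\<in>R. \<forall>b\<in>R. a * b \<in> P \<longrightarrow> a \<in> P \<or> b \<in> P)"

definition maximal_ideal :: "'a::comm_ring_1 set \<Rightarrow> 'a set \<Rightarrow> bool" where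
  "maximal_ideal R M \<longleftrightarrow> ring_ideal R M \<and> 1 \<notin> M \<and>
     (\<forall>J. ring_ideal R J \<and> 1 \<notin> J \<and> M \<subseteq> J \<longrightarrow> J = M)"

definition radical :: "'a::comm_ring_1 set \<Rightarrow> 'a set" where
  "radical I = {x. \<exists>n::nat. x ^ n \<in> I}"

definition spec :: "'a::comm_ring_1 set \<Rightarrow> 'a set set" where
  "spec R = {P. prime_ideal R P}"

definition zariski :: "'a::comm_ring_1 set \<Rightarrow> 'a set topology" where
  "zariski R = topology_generated_by {{P \<in> spec R. a \<notin> P} | a. a \<in> R}"

definition completely_normal_ring :: "'a::comm_ring_1 set \<Rightarrow> bool" where
  "completely_normal_ring R \<longleftrightarrow> hereditarily normal_space (zariski R)"

definition pm_ring :: "'a::comm_ring_1 set \<Rightarrow> bool" where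
  "pm_ring R \<longleftrightarrow> (\<forall>P\<in>spec R. \<exists>!M. maximal_ideal R M \<and> P \<subseteq> M)"

definition dense_subring :: "'a::comm_ring_1 set \<Rightarrow> 'a set \<Rightarrow> bool" where
  "dense_subring A B \<longleftrightarrow> is_subring A B \<and>
     (\<forall>I. ring_ideal B I \<longrightarrow>
        (\<forall>b\<in>B - radical I. \<exists>a\<in>B - radical I. a * b \<in> A))"

end

theory Submission
  imports Defs
begin

lemma spec_topspace:
  assumes "1 \<in> R"
  shows "topspace (zariski R) = spec R"
  using assms unfolding zariski_def spec_def prime_ideal_def by auto

lemma D_open:
  "a \<in> R \<Longrightarrow> openin (zariski R) {P \<in> spec R. a \<notin> P}"
  unfolding zariski_def by (rule topology_generated_by_Basis) auto

lemma open_down: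
  assumes "openin (zariski R) U" "Q \<in> U" "P \<in> spec R" "P \<subseteq> Q"
  shows "P \<in> U"
proof -
  have "generate_topology_on {{P \<in> spec R. a \<notin> P} | a. a \<in> R} U"
    using assms(1) unfolding zariski_def by (rule openin_topology_generated_by)
  then show ?thesis using assms(2-4)
    by (induction arbitrary: Q rule: generate_topology_on.induct) blast+
qed

lemma prime_radical:
  assumes "prime_ideal (UNIV::'a::comm_ring_1 set) Q"
  shows "radical Q = Q"
proof -
  have "x ^ n \<in> Q \<Longrightarrow> x \<in> Q" for x :: 'a and n
  proof (induction n)
    case 0 then show ?case using assms unfolding prime_ideal_def by auto
  next
    case (Suc n) then show ?case using assms unfolding prime_ideal_def by auto
  qed
  moreover have "x \<in> Q \<Longrightarrow> x ^ 1 \<in> Q" for x by simp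
  ultimately show ?thesis unfolding radical_def by blast
qed

lemma contract_prime:
  assumes "is_subring A UNIV" "prime_ideal (UNIV::'a::comm_ring_1 set) Q"
  shows "prime_ideal A (Q \<inter> A)"
  using assms unfolding prime_ideal_def ring_ideal_def is_subring_def by auto

lemma maximal_prime:
  assumes "maximal_ideal (UNIV::'a::comm_ring_1 set) M"
  shows "prime_ideal UNIV M"
proof -
  have I: "ring_ideal UNIV M" and n1: "1 \<notin> M"
   and mx: "\<And>J. ring_ideal UNIV J \<Longrightarrow> 1 \<notin> J \<Longrightarrow> M \<subseteq> J \<Longrightarrow> J = M"
    using assms unfolding maximal_ideal_def by auto
  have "a \<in> M \<or> b \<in> M" if ab: "a * b \<in> M" for a b :: 'a
  proof (rule ccontr)
    assume na: "\<not> (a \<in> M \<or> b \<in> M)"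
    define J where "J = {m + r * a | m r. m \<in> M}"
    have "ring_ideal UNIV J"
      unfolding ring_ideal_def J_def
    proof (intro conjI ballI)
      show "0 \<in> {m + r * a |m r. m \<in> M}" using I unfolding ring_ideal_def
        by (metis (mono_tags, lifting) add.right_neutral mem_Collect_eq mult_zero_left)
    next
      fix x y assume "x \<in> {m + r * a |m r. m \<in> M}" "y \<in> {m + r * a |m r. m \<in> M}"
      then obtain m1 r1 m2 r2 where "x = m1 + r1 * a" "y = m2 + r2 * a" "m1 \<in> M" "m2 \<in> M" by auto
      moreover have "m1 + m2 \<in> M" using I \<open>m1 \<in> M\<close> \<open>m2 \<in> M\<close> unfolding ring_ideal_def by blast
      ultimately have "x + y = (m1 + m2) + (r1 + r2) * a \<and> m1 + m2 \<in> M" by (simp add: algebra_simps)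
      then show "x + y \<in> {m + r * a |m r. m \<in> M}" by blast
    next
      fix s x assume "x \<in> {m + r * a |m r. m \<in> M}"
      then obtain m1 r1 where "x = m1 + r1 * a" "m1 \<in> M" by auto
      moreover have "s * m1 \<in> M" using I \<open>m1 \<in> M\<close> unfolding ring_ideal_def by blast
      ultimately have "s * x = (s * m1) + (s * r1) * a \<and> s * m1 \<in> M" by (simp add: algebra_simps)
      then show "s * x \<in> {m + r * a |m r. m \<in> M}" by blast
    qed (auto simp: I[unfolded ring_ideal_def])
    moreover have "M \<subseteq> J"
    proof
      fix x assume "x \<in> M"
      then have "x = x + 0 * a \<and> x \<in> M" by simp
      then show "x \<in> J" unfolding J_def by blast
    qed
    moreover have "a = 0 + 1 * a \<and> 0 \<in> M" using I unfolding ring_ideal_def by simp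
    then have "a \<in> J" unfolding J_def by blast
    ultimately have "1 \<in> J" using mx na by blast
    then obtain m r where mr: "1 = m + r * a" "m \<in> M" unfolding J_def by auto
    then have "b = b * m + r * (a * b)" by (metis mult.commute mult.left_commute mult_1_right distrib_left)
    moreover have "b * m \<in> M" "r * (a * b) \<in> M" using I mr ab unfolding ring_ideal_def by (auto simp: mult.commute)
    ultimately have "b \<in> M" using I unfolding ring_ideal_def by metis
    then show False using na by blast
  qed
  then show ?thesis using I n1 unfolding prime_ideal_def by blast
qed

lemma exists_maximal:
  assumes "prime_ideal (UNIV::'a::comm_ring_1 set) P"
  shows "\<exists>M. maximal_ideal UNIV M \<and> P \<subseteq> M"
proof -
  define \<A> where "\<A> = {J. ring_ideal (UNIV::'a set) J \<and> 1 \<notin> J \<and> P \<subseteq> J}"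
  have "P \<in> \<A>" using assms unfolding \<A>_def prime_ideal_def by auto
  moreover have "\<Union>C \<in> \<A>" if "C \<noteq> {}" "subset.chain \<A> C" for C
  proof -
    have ch: "C \<subseteq> \<A>" "\<And>X Y. X \<in> C \<Longrightarrow> Y \<in> C \<Longrightarrow> X \<subseteq> Y \<or> Y \<subseteq> X"
      using that(2) unfolding subset.chain_def by auto
    show ?thesis unfolding \<A>_def ring_ideal_def
    proof (intro CollectI conjI ballI)
      show "0 \<in> \<Union>C" using that(1) ch unfolding \<A>_def ring_ideal_def by blast
      show "1 \<notin> \<Union>C" using ch unfolding \<A>_def by blast
      show "P \<subseteq> \<Union>C" using that(1) ch unfolding \<A>_def by blast
      fix x y assume "x \<in> \<Union>C" "y \<in> \<Union>C"
      then obtain X Y where "x \<in> X" "y \<in> Y" "X \<in> C" "Y \<in> C" by auto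
      then have "\<exists>Z\<in>C. x \<in> Z \<and> y \<in> Z" using ch(2) by blast
      then obtain Z where Z: "Z \<in> C" "x \<in> Z" "y \<in> Z" by blast
      then have "ring_ideal UNIV Z" using ch(1) unfolding \<A>_def by blast
      then have "x + y \<in> Z" using Z unfolding ring_ideal_def by blast
      then show "x + y \<in> \<Union>C" using Z by blast
    next
      fix r x assume "x \<in> \<Union>C"
      then show "r * x \<in> \<Union>C" using ch unfolding \<A>_def ring_ideal_def by blast
    qed auto
  qed
  ultimately obtain M where "M \<in> \<A>" "\<forall>X\<in>\<A>. M \<subseteq> X \<longrightarrow> X = M"
    using subset_Zorn_nonempty[of \<A>] by blast
  then have Mi: "ring_ideal UNIV M" "1 \<notin> M" "P \<subseteq> M"
    and mx: "\<forall>X. ring_ideal UNIV X \<and> 1 \<notin> X \<and> P \<subseteq> X \<longrightarrow> M \<subseteq> X \<longrightarrow> X = M"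
    by (auto simp: \<A>_def)
  have "maximal_ideal UNIV M" unfolding maximal_ideal_def using Mi mx by (meson order_trans)
  then show ?thesis using Mi by blast
qed

theorem theorem4p7:
  fixes A :: "'a::comm_ring_1 set"
  assumes "dense_subring A (UNIV :: 'a set)"
    and "completely_normal_ring A"
  shows "completely_normal_ring (UNIV :: 'a set) \<and> pm_ring (UNIV :: 'a set)"
proof -
  have sub: "is_subring A UNIV" and dens: "\<And>I b. ring_ideal UNIV I \<Longrightarrow> b \<notin> radical I \<Longrightarrow> \<exists>a. a \<notin> radical I \<and> a * b \<in> A"
    using assms(1) unfolding dense_subring_def by auto
  have A1: "1 \<in> A" using sub unfolding is_subring_def by auto
  define f where "f = (\<lambda>Q::'a set. Q \<inter> A)"
  define XB where "XB = zariski (UNIV::'a set)"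
  define XA where "XA = zariski A"
  define T where "T = f ` spec (UNIV::'a set)"
  have tB: "topspace XB = spec UNIV" using spec_topspace[of UNIV] XB_def by simp
  have tA: "topspace XA = spec A" using spec_topspace[OF A1] XA_def by simp
  have fmap: "f Q \<in> spec A" if "Q \<in> spec UNIV" for Q
    using contract_prime[OF sub] that unfolding spec_def f_def by auto
  have TA: "T \<subseteq> spec A" using fmap T_def by auto
  have inj: "inj_on f (spec UNIV)"
  proof (rule inj_onI)
    fix Q1 Q2 assume Q: "Q1 \<in> spec UNIV" "Q2 \<in> spec UNIV" "f Q1 = f Q2"
    have "Q1 \<subseteq> Q2" if "Q1 \<in> spec UNIV" "Q2 \<in> spec UNIV" "f Q1 = f Q2" for Q1 Q2
    proof
      fix b assume "b \<in> Q1"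
      show "b \<in> Q2"
      proof (rule ccontr)
        assume "b \<notin> Q2"
        have pQ2: "prime_ideal UNIV Q2" using that spec_def by auto
        then have "radical Q2 = Q2" by (rule prime_radical)
        then obtain a where "a \<notin> Q2" "a * b \<in> A" using dens[of Q2 b] pQ2 \<open>b \<notin> Q2\<close> unfolding prime_ideal_def by auto
        then have "a * b \<notin> Q2" using pQ2 \<open>b \<notin> Q2\<close> unfolding prime_ideal_def by auto
        moreover have "a * b \<in> Q1" using \<open>b \<in> Q1\<close> that(1) unfolding spec_def prime_ideal_def ring_ideal_def by auto
        ultimately show False using that(3) \<open>a * b \<in> A\<close> unfolding f_def by blast
      qed
    qed
    then show "Q1 = Q2" using Q by blast
  qed
  have cont: "continuous_map XB XA f"
    unfolding continuous_map_def
  proof (intro conjI allI impI)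
    show "f \<in> topspace XB \<rightarrow> topspace XA" using fmap tA tB by auto
    fix U assume "openin XA U"
    then have "generate_topology_on {{P \<in> spec A. a \<notin> P} | a. a \<in> A} U"
      unfolding XA_def zariski_def by (rule openin_topology_generated_by)
    then show "openin XB {x \<in> topspace XB. f x \<in> U}"
    proof (induction rule: generate_topology_on.induct)
      case Empty then show ?case by simp
    next
      case (Int a b)
      have "{x \<in> topspace XB. f x \<in> a \<inter> b} = {x \<in> topspace XB. f x \<in> a} \<inter> {x \<in> topspace XB. f x \<in> b}" by auto
      then show ?case using Int.IH by (simp add: openin_Int)
    next
      case (UN K)
      have "{x \<in> topspace XB. f x \<in> \<Union>K} = \<Union>((\<lambda>k. {x \<in> topspace XB. f x \<in> k}) ` K)" by auto
      then show ?case using UN.IH by (auto intro!: openin_Union)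
    next
      case (Basis s)
      then obtain a where a: "a \<in> A" "s = {P \<in> spec A. a \<notin> P}" by auto
      have "{x \<in> topspace XB. f x \<in> s} = {P \<in> spec UNIV. a \<notin> P}"
        using a fmap tB unfolding f_def by auto
      then show ?case using D_open[of a UNIV] XB_def by simp
    qed
  qed
  have opn: "openin (subtopology XA T) (f ` U)" if "openin XB U" for U
  proof -
    have "generate_topology_on {{P \<in> spec UNIV. a \<notin> P} | a. a \<in> (UNIV::'a set)} U"
      using that unfolding XB_def zariski_def by (rule openin_topology_generated_by)
    then have "U \<subseteq> spec UNIV \<and> openin (subtopology XA T) (f ` U)"
    proof (induction rule: generate_topology_on.induct)
      case Empty then show ?case by simp
    next
      case (Int a b)
      then have "f ` (a \<inter> b) = f ` a \<inter> f ` b" using inj_on_image_Int[OF inj] by blast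
      then show ?case using Int.IH by (auto simp: openin_Int)
    next
      case (UN K)
      then show ?case by (auto simp: image_Union intro!: openin_Union)
    next
      case (Basis s)
      then obtain b where b: "s = {P \<in> spec UNIV. b \<notin> P}" by auto
      define W where "W = \<Union>{{P \<in> spec A. c \<notin> P} | c. c \<in> A \<and> (\<exists>r. c = r * b)}"
      have W: "openin XA W" unfolding W_def XA_def by (rule openin_Union) (auto intro: D_open)
      have "f ` s = W \<inter> T"
      proof
        show "f ` s \<subseteq> W \<inter> T"
        proof
          fix P assume "P \<in> f ` s"
          then obtain Q where Q: "Q \<in> spec UNIV" "b \<notin> Q" "P = f Q" using b by auto
          have pQ: "prime_ideal UNIV Q" using Q spec_def by auto
          then have "radical Q = Q" by (rule prime_radical)
          then obtain a where "a \<notin> Q" "a * b \<in> A" using dens[of Q b] pQ Q(2) unfolding prime_ideal_def by auto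
          then have "a * b \<notin> Q" using pQ Q(2) unfolding prime_ideal_def by auto
          then have "P \<in> {P \<in> spec A. a * b \<notin> P}" using Q fmap unfolding f_def by auto
          then have "P \<in> W" unfolding W_def using \<open>a * b \<in> A\<close> by blast
          then show "P \<in> W \<inter> T" using Q T_def by auto
        qed
      next
        show "W \<inter> T \<subseteq> f ` s"
        proof
          fix P assume "P \<in> W \<inter> T"
          then obtain Q c r where Q: "Q \<in> spec UNIV" "P = f Q" "c \<in> A" "c = r * b" "c \<notin> P"
            unfolding W_def T_def by auto
          have "b \<notin> Q"
          proof
            assume "b \<in> Q"
            then have "c \<in> Q" using Q unfolding spec_def prime_ideal_def ring_ideal_def by auto
            then show False using Q unfolding f_def by auto
          qed
          then show "P \<in> f ` s" using Q b by auto
        qed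
      qed
      then have "openin (subtopology XA T) (f ` s)" unfolding openin_subtopology using W by blast
      moreover have "s \<subseteq> spec UNIV" using b by auto
      ultimately show ?case by simp
    qed
    then show ?thesis by simp
  qed
  have hom: "homeomorphic_map XB (subtopology XA T) f"
  proof (rule bijective_open_imp_homeomorphic_map)
    show "continuous_map XB (subtopology XA T) f"
      using cont by (auto simp: continuous_map_in_subtopology tB T_def)
    show "open_map XB (subtopology XA T) f" unfolding open_map_def using opn by blast
    show "f ` topspace XB = topspace (subtopology XA T)" using tA tB TA T_def by auto
    show "inj_on f (topspace XB)" using inj tB by simp
  qed
  have cnB: "completely_normal_ring (UNIV::'a set)"
    unfolding completely_normal_ring_def hereditarily_def
  proof (intro allI impI)
    fix S assume S: "S \<subseteq> topspace (zariski (UNIV::'a set))"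
    have "homeomorphic_map (subtopology XB S) (subtopology (subtopology XA T) (f ` S)) f"
      using S TA fmap tB unfolding XB_def by (intro homeomorphic_map_subtopologies[OF hom[unfolded XB_def]]) (auto simp: tA T_def)
    then have "(subtopology XB S) homeomorphic_space (subtopology XA (T \<inter> f ` S))"
      by (metis homeomorphic_map_imp_homeomorphic_space subtopology_subtopology)
    moreover have "normal_space (subtopology XA (T \<inter> f ` S))"
      using assms(2) unfolding completely_normal_ring_def hereditarily XA_def by blast
    ultimately show "normal_space (subtopology (zariski UNIV) S)"
      using homeomorphic_normal_space XB_def by blast
  qed
  have nS: "normal_space (subtopology XB S)" for S
    using cnB unfolding completely_normal_ring_def hereditarily XB_def by blast
  have Dc: "closedin XB (topspace XB - {Q \<in> spec UNIV. a \<notin> Q})" for a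
    using D_open[of a UNIV] XB_def by (intro closedin_diff) auto
  have pm: "pm_ring (UNIV::'a set)"
    unfolding pm_ring_def
  proof
    fix P assume P: "P \<in> spec (UNIV::'a set)"
    then obtain M where M: "maximal_ideal UNIV M" "P \<subseteq> M" using exists_maximal[of P] unfolding spec_def by blast
    have uniq: "M2 = M1" if M1: "maximal_ideal UNIV M1" "P \<subseteq> M1" and M2: "maximal_ideal UNIV M2" "P \<subseteq> M2" for M1 M2
    proof (rule ccontr)
      assume ne: "M2 \<noteq> M1"
      have "\<not> M1 \<subseteq> M2" using M1 M2 ne unfolding maximal_ideal_def by blast
      then obtain a where a: "a \<in> M1" "a \<notin> M2" by blast
      have "\<not> M2 \<subseteq> M1" using M1 M2 ne unfolding maximal_ideal_def by blast
      then obtain b where b: "b \<in> M2" "b \<notin> M1" by blast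
      have sM: "M1 \<in> spec UNIV" "M2 \<in> spec UNIV" using maximal_prime[OF M1(1)] maximal_prime[OF M2(1)] unfolding spec_def by simp_all
      define S where "S = {P, M1, M2}"
      have d1: "{M1} = (topspace XB - {Q \<in> spec UNIV. a \<notin> Q}) \<inter> S"
        using a P sM M2(2) unfolding S_def tB by auto
      have c1: "closedin (subtopology XB S) {M1}"
        unfolding closedin_subtopology using Dc d1 by blast
      have d2: "{M2} = (topspace XB - {Q \<in> spec UNIV. b \<notin> Q}) \<inter> S"
        using b P sM M1(2) unfolding S_def tB by auto
      have c2: "closedin (subtopology XB S) {M2}"
        unfolding closedin_subtopology using Dc d2 by blast
      have dj: "disjnt {M1} {M2}" using ne by auto
      have "\<exists>U V. openin (subtopology XB S) U \<and> openin (subtopology XB S) V \<and>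
        {M1} \<subseteq> U \<and> {M2} \<subseteq> V \<and> disjnt U V"
        using nS[of S] c1 c2 dj unfolding normal_space_def by blast
      then obtain U V where UV: "openin (subtopology XB S) U" "openin (subtopology XB S) V"
        "M1 \<in> U" "M2 \<in> V" "disjnt U V" by auto
      obtain U' where U': "openin XB U'" "U = U' \<inter> S" using UV(1) unfolding openin_subtopology by blast
      obtain V' where V': "openin XB V'" "V = V' \<inter> S" using UV(2) unfolding openin_subtopology by blast
      have "P \<in> U'" using open_down[of UNIV U' M1 P] U' UV(3) P M1(2) unfolding XB_def by blast
      moreover have "P \<in> V'" using open_down[of UNIV V' M2 P] V' UV(4) P M2(2) unfolding XB_def by blast
      ultimately show False using U' V' UV(5) unfolding S_def disjnt_def by blast
    qed
    show "\<exists>!M. maximal_ideal UNIV M \<and> P \<subseteq> M"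
    proof (rule ex1I[of _ M])
      show "maximal_ideal UNIV M \<and> P \<subseteq> M" using M by blast
      fix M' assume "maximal_ideal UNIV M' \<and> P \<subseteq> M'"
      then show "M' = M" using uniq[of M M'] M by blast
    qed
  qed
  show ?thesis using cnB pm by blast
qed

end
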